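(* Let $\mathbb{F}$ be an algebraically closed field with $\mathrm{char}\,\mathbb{F}=2$ and $n\ge4$. Let $\underline{a}=(e_1,e_2,\mathbf{u}_1,\mathbf{v}_1,0,\ldots,0)\in\mathbb{M}^n$ and let $\underline{b}\in\mathbb{M}^n$ be such that $f(\underline{a})=f(\underline{b})$ for all $f\in S_n^{(3)}$. Then ${\rm G}_2\underline{a}={\rm G}_2\underline{b}$.
   Context: The split octonion algebra $\mathbf{O}$ is the 8-dimensional $\mathbb{F}$-vector space of formal matrices $a=\begin{pmatrix}\alpha&\mathbf{u}\\ \mathbf{v}&\beta\end{pmatrix}$ with $\alpha,\beta\in\mathbb{F}$, $\mathbf{u},\mathbf{v}\in\mathbb{F}^3$, with multiplication $\begin{pmatrix}\alpha&\mathbf{u}\\ \mathbf{v}&\beta\end{pmatrix}\begin{pmatrix}\alpha'&\mathbf{u}'\\ \mathbf{v}'&\beta'\end{pmatrix}=\begin{pmatrix}\alpha\alpha'+\mathbf{u}\cdot\mathbf{v}'&\alpha\mathbf{u}'+\beta'\mathbf{u}-\mathbf{v}\times\mathbf{v}'\\ \alpha'\mathbf{v}+\beta\mathbf{v}'+\mathbf{u}\times\mathbf{u}'&\beta\beta'+\mathbf{v}\cdot\mathbf{u}'\end{pmatrix}$ (dot product and cross product on $\mathbb{F}^3$). Trace $\mathrm{tr}(a)=\alpha+\beta$, norm $n(a)=\alpha\beta-\mathbf{u}\cdot\mathbf{v}$. With $\mathbf{c}_1$ the first standard basis vector of $\mathbb{F}^3$: $e_1$ has $\alpha=1$ and all else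 $0$, $e_2$ has $\beta=1$ and all else $0$, $\mathbf{u}_1$ has $\mathbf{u}=\mathbf{c}_1$ and all else $0$, $\mathbf{v}_1$ has $\mathbf{v}=\mathbf{c}_1$ and all else $0$. $\mathbb{M}=\left\{\begin{pmatrix}\alpha&(\gamma,0,0)\\(\delta,0,0)&\beta\end{pmatrix}\right\}\subseteq\mathbf{O}$ is the quaternion subalgebra. ${\rm G}_2=\mathrm{Aut}(\mathbf{O})$ acts diagonally on $\mathbf{O}^n$. $S_n^{(3)}$ is the set of functions on $\mathbf{O}^n$: $\underline{a}\mapsto n(a_i)$, $\underline{a}\mapsto\mathrm{tr}(a_i)$ ($1\le i\le n$), $\underline{a}\mapsto\mathrm{tr}(a_ia_j)$ ($1\le i<j\le n$), and $\underline{a}\mapsto\mathrm{tr}((a_ia_j)a_k)$ ($1\le i<j<k\le n$). *)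

theory Defs
  imports "HOL-Computational_Algebra.Polynomial"
begin

definition alg_closed :: "'a::field itself \<Rightarrow> bool" where
  "alg_closed _ \<longleftrightarrow> (\<forall>p::'a poly. degree p \<noteq> 0 \<longrightarrow> (\<exists>x. poly p x = 0))"

type_synonym 'a vec3 = "'a \<times> 'a \<times> 'a"

fun dot3 :: "'a::comm_ring_1 vec3 \<Rightarrow> 'a vec3 \<Rightarrow> 'a" where
  "dot3 (a1, a2, a3) (b1, b2, b3) = a1 * b1 + a2 * b2 + a3 * b3"

fun cross3 :: "'a::comm_ring_1 vec3 \<Rightarrow> 'a vec3 \<Rightarrow> 'a vec3" where
  "cross3 (a1, a2, a3) (b1, b2, b3) =
     (a2 * b3 - a3 * b2, a3 * b1 - a1 * b3, a1 * b2 - a2 * b1)"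

fun add3 :: "'a::comm_ring_1 vec3 \<Rightarrow> 'a vec3 \<Rightarrow> 'a vec3" where
  "add3 (a1, a2, a3) (b1, b2, b3) = (a1 + b1, a2 + b2, a3 + b3)"

fun smul3 :: "'a::comm_ring_1 \<Rightarrow> 'a vec3 \<Rightarrow> 'a vec3" where
  "smul3 c (a1, a2, a3) = (c * a1, c * a2, c * a3)"

section \<open>Split octonions: formal matrices (alpha, u; v, beta)\<close>

datatype 'a oct = Oct (oalpha: 'a) (ou: "'a vec3") (ov: "'a vec3") (obeta: 'a)

definition oadd :: "'a::comm_ring_1 oct \<Rightarrow> 'a oct \<Rightarrow> 'a oct" where
  "oadd a b = Oct (oalpha a + oalpha b) (add3 (ou a) (ou b)) (add3 (ov a) (ov b)) (obeta a + obeta b)"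

definition osmul :: "'a::comm_ring_1 \<Rightarrow> 'a oct \<Rightarrow> 'a oct" where
  "osmul c a = Oct (c * oalpha a) (smul3 c (ou a)) (smul3 c (ov a)) (c * obeta a)"

definition ozero :: "'a::comm_ring_1 oct" where
  "ozero = Oct 0 (0, 0, 0) (0, 0, 0) 0"

definition omult :: "'a::comm_ring_1 oct \<Rightarrow> 'a oct \<Rightarrow> 'a oct" where
  "omult a b = Oct
     (oalpha a * oalpha b + dot3 (ou a) (ov b))
     (add3 (add3 (smul3 (oalpha a) (ou b)) (smul3 (obeta b) (ou a))) (smul3 (-1) (cross3 (ov a) (ov b))))
     (add3 (add3 (smul3 (oalpha b) (ov a)) (smul3 (obeta a) (ov b))) (cross3 (ou a) (ou b)))
     (obeta a * obeta b + dot3 (ov a) (ou b))"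

definition otr :: "'a::comm_ring_1 oct \<Rightarrow> 'a" where
  "otr a = oalpha a + obeta a"

definition onorm :: "'a::comm_ring_1 oct \<Rightarrow> 'a" where
  "onorm a = oalpha a * obeta a - dot3 (ou a) (ov a)"

definition oe1 :: "'a::comm_ring_1 oct" where "oe1 = Oct 1 (0,0,0) (0,0,0) 0"
definition oe2 :: "'a::comm_ring_1 oct" where "oe2 = Oct 0 (0,0,0) (0,0,0) 1"
definition ou1 :: "'a::comm_ring_1 oct" where "ou1 = Oct 0 (1,0,0) (0,0,0) 0"
definition ov1 :: "'a::comm_ring_1 oct" where "ov1 = Oct 0 (0,0,0) (1,0,0) 0"

definition quatM :: "'a::comm_ring_1 oct set" where
  "quatM = {Oct \<alpha> (\<gamma>, 0, 0) (\<delta>, 0, 0) \<beta> | \<alpha> \<beta> \<gamma> \<delta>. True}"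

definition G2 :: "('a::comm_ring_1 oct \<Rightarrow> 'a oct) set" where
  "G2 = {g. bij g \<and> (\<forall>x y. g (oadd x y) = oadd (g x) (g y))
             \<and> (\<forall>c x. g (osmul c x) = osmul c (g x))
             \<and> (\<forall>x y. g (omult x y) = omult (g x) (g y))}"

definition G2_orbit :: "'a::comm_ring_1 oct list \<Rightarrow> 'a oct list set" where
  "G2_orbit xs = {map g xs | g. g \<in> G2}"

section \<open>The set of invariants S_n^(3) (indices 0-based)\<close>

definition S3 :: "nat \<Rightarrow> ('a::comm_ring_1 oct list \<Rightarrow> 'a) set" where
  "S3 n =
     {(\<lambda>x. onorm (x ! i)) | i. i < n}
   \<union> {(\<lambda>x. otr (x ! i)) | i. i < n}
   \<union> {(\<lambda>x. otr (omult (x ! i) (x ! j))) | i j. i < j \<and> j < n}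
   \<union> {(\<lambda>x. otr (omult (omult (x ! i) (x ! j)) (x ! k))) | i j k. i < j \<and> j < k \<and> k < n}"

end

theory Submission
  imports Defs
begin

definition phi4 :: "'a::comm_ring_1 \<times> 'a \<times> 'a \<times> 'a \<Rightarrow> 'a \<times> 'a \<times> 'a \<times> 'a \<Rightarrow> 'a \<Rightarrow> 'a \<Rightarrow> 'a \<Rightarrow> 'a \<Rightarrow> 'a \<times> 'a \<times> 'a \<times> 'a" where
 "phi4 U V X11 X12 X21 X22 = (case U of (u1,u2,u3,u4) \<Rightarrow> case V of (v1,v2,v3,v4) \<Rightarrow>
   (X11*(u1*v1+u2*v3)+X12*u1+X21*v1+X22*(v1*u1+v2*u3),
    X11*(u1*v2+u2*v4)+X12*u2+X21*v2+X22*(v1*u2+v2*u4),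
    X11*(u3*v1+u4*v3)+X12*u3+X21*v3+X22*(v3*u1+v4*u3),
    X11*(u3*v2+u4*v4)+X12*u4+X21*v4+X22*(v3*u2+v4*u4)))"

definition gg :: "'a::comm_ring_1 \<times> 'a \<times> 'a \<times> 'a \<Rightarrow> 'a \<times> 'a \<times> 'a \<times> 'a \<Rightarrow> 'a oct \<Rightarrow> 'a oct" where
 "gg U V x = (case x of Oct a (c,x2,x3) (d,y2,y3) b \<Rightarrow>
    case phi4 U V a c d b of (m11,m12,m21,m22) \<Rightarrow>
    case phi4 U V x2 y3 x3 (-y2) of (w11,w12,w21,w22) \<Rightarrow>
    Oct m11 (m12,w11,w21) (m21,-w22,w12) m22)"

lemma gg_Oct: "gg (u1,u2,u3,u4) (v1,v2,v3,v4) (Oct a (c,x2,x3) (d,y2,y3) b) =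
  Oct (a*(u1*v1+u2*v3)+c*u1+d*v1+b*(v1*u1+v2*u3))
      (a*(u1*v2+u2*v4)+c*u2+d*v2+b*(v1*u2+v2*u4),
       x2*(u1*v1+u2*v3)+y3*u1+x3*v1+(-y2)*(v1*u1+v2*u3),
       x2*(u3*v1+u4*v3)+y3*u3+x3*v3+(-y2)*(v3*u1+v4*u3))
      (a*(u3*v1+u4*v3)+c*u3+d*v3+b*(v3*u1+v4*u3),
       -(x2*(u3*v2+u4*v4)+y3*u4+x3*v4+(-y2)*(v3*u2+v4*u4)),
       x2*(u1*v2+u2*v4)+y3*u2+x3*v2+(-y2)*(v1*u2+v2*u4))
      (a*(u3*v2+u4*v4)+c*u4+d*v4+b*(v3*u2+v4*u4))"
  by (simp add: gg_def phi4_def)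


definition psi4 :: "'a::comm_ring_1 \<times> 'a \<times> 'a \<times> 'a \<Rightarrow> 'a \<times> 'a \<times> 'a \<times> 'a \<Rightarrow> 'a \<Rightarrow> 'a \<Rightarrow> 'a \<Rightarrow> 'a \<Rightarrow> 'a \<times> 'a \<times> 'a \<times> 'a" where
 "psi4 U V X11 X12 X21 X22 = (case U of (u1,u2,u3,u4) \<Rightarrow> case V of (v1,v2,v3,v4) \<Rightarrow>
   ((u1*v1+u2*v3)*X11 + (u1*v2+u2*v4)*X21 + (u3*v1+u4*v3)*X12 + (u3*v2+u4*v4)*X22,
    v1*X11 + v2*X21 + v3*X12 + v4*X22,
    u1*X11 + u2*X21 + u3*X12 + u4*X22,
    (v1*u1+v2*u3)*X11 + (v1*u2+v2*u4)*X21 + (v3*u1+v4*u3)*X12 + (v3*u2+v4*u4)*X22))"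

definition hh :: "'a::comm_ring_1 \<times> 'a \<times> 'a \<times> 'a \<Rightarrow> 'a \<times> 'a \<times> 'a \<times> 'a \<Rightarrow> 'a oct \<Rightarrow> 'a oct" where
 "hh U V x = (case x of Oct a (c,x2,x3) (d,y2,y3) b \<Rightarrow>
    case psi4 U V a c d b of (m11,m12,m21,m22) \<Rightarrow>
    case psi4 U V x2 y3 x3 (-y2) of (w11,w12,w21,w22) \<Rightarrow>
    Oct m11 (m12,w11,w21) (m21,-w22,w12) m22)"

definition goodUV :: "'a::field \<times> 'a \<times> 'a \<times> 'a \<Rightarrow> 'a \<times> 'a \<times> 'a \<times> 'a \<Rightarrow> bool" where
 "goodUV U V = (case U of (u1,u2,u3,u4) \<Rightarrow> case V of (v1,v2,v3,v4) \<Rightarrow>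
   u1+u4 = 0 \<and> u1*u4 - u2*u3 = 0 \<and> v1+v4=0 \<and> v1*v4-v2*v3=0 \<and> u1*v1+u2*v3+u3*v2+u4*v4 = 1)"

lemma gg_hom:
  assumes "goodUV U V"
  shows "gg U V (omult x y) = omult (gg U V x) (gg U V y)"
proof -
  obtain u1 u2 u3 u4 where U: "U = (u1,u2,u3,u4)" by (cases U) auto
  obtain v1 v2 v3 v4 where V: "V = (v1,v2,v3,v4)" by (cases V) auto
  obtain a c x2 x3 d y2 y3 b where x: "x = Oct a (c,x2,x3) (d,y2,y3) b" by (cases x) auto
  obtain a' c' x2' x3' d' y2' y3' b' where y: "y = Oct a' (c',x2',x3') (d',y2',y3') b'" by (cases y) auto
  have h: "u1+u4 = 0" "u1*u4 - u2*u3 = 0" "v1+v4=0" "v1*v4-v2*v3=0" "u1*v1+u2*v3+u3*v2+u4*v4 = 1"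
    using assms by (auto simp: goodUV_def U V)
  show ?thesis unfolding U V x y
    apply (simp add: omult_def gg_Oct)
    apply (intro conjI)
    using h by algebra+
qed

lemma hg:
  assumes "goodUV U V"
  shows "hh U V (gg U V x) = x"
proof -
  obtain u1 u2 u3 u4 where U: "U = (u1,u2,u3,u4)" by (cases U) auto
  obtain v1 v2 v3 v4 where V: "V = (v1,v2,v3,v4)" by (cases V) auto
  obtain a c x2 x3 d y2 y3 b where x: "x = Oct a (c,x2,x3) (d,y2,y3) b" by (cases x) auto
  have h: "u1+u4 = 0" "u1*u4 - u2*u3 = 0" "v1+v4=0" "v1*v4-v2*v3=0" "u1*v1+u2*v3+u3*v2+u4*v4 = 1"
    using assms by (auto simp: goodUV_def U V)
  show ?thesis unfolding U V x
    apply (simp add: gg_Oct hh_def psi4_def)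
    apply (intro conjI)
    using h by algebra+
qed

lemma gh:
  assumes "goodUV U V"
  shows "gg U V (hh U V x) = x"
proof -
  obtain u1 u2 u3 u4 where U: "U = (u1,u2,u3,u4)" by (cases U) auto
  obtain v1 v2 v3 v4 where V: "V = (v1,v2,v3,v4)" by (cases V) auto
  obtain a c x2 x3 d y2 y3 b where x: "x = Oct a (c,x2,x3) (d,y2,y3) b" by (cases x) auto
  have h: "u1+u4 = 0" "u1*u4 - u2*u3 = 0" "v1+v4=0" "v1*v4-v2*v3=0" "u1*v1+u2*v3+u3*v2+u4*v4 = 1"
    using assms by (auto simp: goodUV_def U V)
  show ?thesis unfolding U V x
    apply (simp add: gg_def hh_def psi4_def phi4_def)
    apply (intro conjI)
    using h by algebra+
qed


lemma gg_add: "gg U V (oadd x y) = oadd (gg U V x) (gg U V y)"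
proof -
  obtain u1 u2 u3 u4 where U: "U = (u1,u2,u3,u4)" by (cases U) auto
  obtain v1 v2 v3 v4 where V: "V = (v1,v2,v3,v4)" by (cases V) auto
  obtain a c x2 x3 d y2 y3 b where x: "x = Oct a (c,x2,x3) (d,y2,y3) b" by (cases x) auto
  obtain a' c' x2' x3' d' y2' y3' b' where y: "y = Oct a' (c',x2',x3') (d',y2',y3') b'" by (cases y) auto
  show ?thesis unfolding U V x y
    by (simp add: oadd_def gg_Oct algebra_simps)
qed

lemma gg_smul: "gg U V (osmul k x) = osmul k (gg U V x)"
proof -
  obtain u1 u2 u3 u4 where U: "U = (u1,u2,u3,u4)" by (cases U) auto
  obtain v1 v2 v3 v4 where V: "V = (v1,v2,v3,v4)" by (cases V) auto
  obtain a c x2 x3 d y2 y3 b where x: "x = Oct a (c,x2,x3) (d,y2,y3) b" by (cases x) auto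
  show ?thesis unfolding U V x
    by (simp add: osmul_def gg_Oct algebra_simps)
qed

lemma gg_G2:
  assumes "goodUV U V"
  shows "gg U V \<in> G2"
proof -
  have "bij (gg U V)"
    by (rule o_bij[of "hh U V"]) (auto simp: fun_eq_iff hg gh assms)
  then show ?thesis unfolding G2_def using gg_add gg_smul gg_hom[OF assms] by blast
qed

lemma G2_comp: "g \<in> G2 \<Longrightarrow> h \<in> G2 \<Longrightarrow> h \<circ> g \<in> G2"
  unfolding G2_def by (auto intro: bij_comp)

lemma G2_inv:
  assumes "g \<in> G2" shows "inv g \<in> G2"
proof -
  have b: "bij g" and A: "\<And>x y. g (oadd x y) = oadd (g x) (g y)"
    and S: "\<And>c x. g (osmul c x) = osmul c (g x)"
    and M: "\<And>x y. g (omult x y) = omult (g x) (g y)" using assms unfolding G2_def by auto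
  have gi: "\<And>x. g (inv g x) = x" using b by (simp add: bij_is_surj surj_f_inv_f)
  have ig: "\<And>x. inv g (g x) = x" using b by (simp add: bij_is_inj)
  have "inv g (oadd x y) = oadd (inv g x) (inv g y)" for x y
    by (metis A gi ig)
  moreover have "inv g (osmul c x) = osmul c (inv g x)" for c x
    by (metis S gi ig)
  moreover have "inv g (omult x y) = omult (inv g x) (inv g y)" for x y
    by (metis M gi ig)
  moreover have "bij (inv g)" using b by (simp add: bij_imp_bij_inv)
  ultimately show ?thesis unfolding G2_def by blast
qed

lemma orbit_eq:
  assumes g: "g \<in> G2" and b: "b = map g a"
  shows "G2_orbit a = G2_orbit b"
proof
  show "G2_orbit b \<subseteq> G2_orbit a"
  proof
    fix x assume "x \<in> G2_orbit b"
    then obtain h where h: "h \<in> G2" "x = map h b" unfolding G2_orbit_def by blast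
    have "x = map (h \<circ> g) a" using h(2) b by simp
    moreover have "h \<circ> g \<in> G2" using G2_comp[OF g h(1)] .
    ultimately show "x \<in> G2_orbit a" unfolding G2_orbit_def by blast
  qed
next
  have bg: "bij g" using g unfolding G2_def by auto
  have ia: "map (inv g) b = a" using b bg by (simp add: map_map bij_is_inj o_def)
  show "G2_orbit a \<subseteq> G2_orbit b"
  proof
    fix x assume "x \<in> G2_orbit a"
    then obtain h where h: "h \<in> G2" "x = map h a" unfolding G2_orbit_def by blast
    have "x = map (h \<circ> inv g) b" using h(2) ia by (metis map_map)
    moreover have "h \<circ> inv g \<in> G2" using G2_comp[OF G2_inv[OF g] h(1)] .
    ultimately show "x \<in> G2_orbit b" unfolding G2_orbit_def by blast
  qed
qed

definition mq :: "'a::zero \<Rightarrow> 'a \<Rightarrow> 'a \<Rightarrow> 'a \<Rightarrow> 'a oct" where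
  "mq a c d b = Oct a (c,0,0) (d,0,0) b"

lemma hh_M:
  fixes z1 z2 z3 z4 :: "'a::field"
  assumes "goodUV (u1,u2,u3,u4) (v1,v2,v3,v4)"
  shows "hh (u1,u2,u3,u4) (v1,v2,v3,v4) (mq z1 z2 z3 z4) =
    mq (otr (omult (omult (mq z1 z2 z3 z4) (mq u1 u2 u3 u4)) (mq v1 v2 v3 v4)))
       (otr (omult (mq z1 z2 z3 z4) (mq v1 v2 v3 v4)))
       (otr (omult (mq z1 z2 z3 z4) (mq u1 u2 u3 u4)))
       (otr (mq z1 z2 z3 z4) - otr (omult (omult (mq z1 z2 z3 z4) (mq u1 u2 u3 u4)) (mq v1 v2 v3 v4)))"
proof -
  have h: "u1+u4 = 0" "u1*u4 - u2*u3 = 0" "v1+v4=0" "v1*v4-v2*v3=0" "u1*v1+u2*v3+u3*v2+u4*v4 = 1"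
    using assms by (auto simp: goodUV_def)
  show ?thesis
    apply (simp add: hh_def psi4_def mq_def omult_def otr_def)
    
    using h by algebra+
qed

lemma cyc3: "otr (omult (omult (mq u1 u2 u3 u4) (mq v1 v2 v3 v4)) (mq z1 z2 z3 z4)) =
    otr (omult (omult (mq z1 z2 z3 z4) (mq u1 u2 u3 u4)) (mq v1 v2 v3 v4))"
  by (simp add: mq_def omult_def otr_def algebra_simps)

lemma cyc2: "otr (omult (mq u1 u2 u3 u4) (mq z1 z2 z3 z4)) = otr (omult (mq z1 z2 z3 z4) (mq u1 u2 u3 u4))"
  by (simp add: mq_def omult_def otr_def algebra_simps)


lemma step:
  assumes "goodUV (u1,u2,u3,u4) (v1,v2,v3,v4)" and Z: "Z = mq z1 z2 z3 z4"
    and "otr (omult (omult Z (mq u1 u2 u3 u4)) (mq v1 v2 v3 v4)) = t1"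
    and "otr (omult Z (mq v1 v2 v3 v4)) = t2"
    and "otr (omult Z (mq u1 u2 u3 u4)) = t3"
    and "otr Z = t0"
  shows "Z = gg (u1,u2,u3,u4) (v1,v2,v3,v4) (mq t1 t2 t3 (t0 - t1))"
proof -
  have "Z = gg (u1,u2,u3,u4) (v1,v2,v3,v4) (hh (u1,u2,u3,u4) (v1,v2,v3,v4) Z)"
    using gh[OF assms(1)] by simp
  also have "hh (u1,u2,u3,u4) (v1,v2,v3,v4) Z = mq t1 t2 t3 (t0 - t1)"
    using hh_M[OF assms(1), of z1 z2 z3 z4] assms(2-6) by simp
  finally show ?thesis .
qed

theorem lemma7p8:
  fixes n :: nat and b :: "'a::field oct list"
  assumes "alg_closed TYPE('a)"
    and "(2::'a) = 0"
    and "n \<ge> 4"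
    and "length b = n" and "set b \<subseteq> quatM"
    and "\<forall>f \<in> S3 n. f (oe1 # oe2 # ou1 # ov1 # replicate (n - 4) ozero) = f b"
  shows "G2_orbit (oe1 # oe2 # ou1 # ov1 # replicate (n - 4) ozero) = G2_orbit b"
proof -
  define a :: "'a oct list" where "a = oe1 # oe2 # ou1 # ov1 # replicate (n - 4) ozero"
  have inv: "\<And>f. f \<in> S3 n \<Longrightarrow> f a = f b" using assms(6) unfolding a_def by blast
  have Nr: "onorm (a!i) = onorm (b!i)" if "i < n" for i
  proof -
    have "(\<lambda>x. onorm (x ! i)) \<in> S3 n" using that unfolding S3_def by blast
    from inv[OF this] show ?thesis by simp
  qed
  have Tr: "otr (a!i) = otr (b!i)" if "i < n" for i
  proof -
    have "(\<lambda>x. otr (x ! i)) \<in> S3 n" using that unfolding S3_def by blast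
    from inv[OF this] show ?thesis by simp
  qed
  have P2: "otr (omult (a!i) (a!j)) = otr (omult (b!i) (b!j))" if "i < j" "j < n" for i j
  proof -
    have "(\<lambda>x. otr (omult (x ! i) (x ! j))) \<in> S3 n" using that unfolding S3_def by blast
    from inv[OF this] show ?thesis by simp
  qed
  have P3: "otr (omult (omult (a!i) (a!j)) (a!k)) = otr (omult (omult (b!i) (b!j)) (b!k))"
    if "i < j" "j < k" "k < n" for i j k
  proof -
    have "(\<lambda>x. otr (omult (omult (x ! i) (x ! j)) (x ! k))) \<in> S3 n" using that unfolding S3_def by blast
    from inv[OF this] show ?thesis by simp
  qed
  have bM: "\<exists>z1 z2 z3 z4. b!i = mq z1 z2 z3 z4" if "i < n" for i
  proof -
    have "b!i \<in> quatM" using that assms(4,5) nth_mem by blast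
    then show ?thesis unfolding quatM_def mq_def by blast
  qed
  have a0: "a!0 = oe1" and a1: "a!1 = oe2" and a2: "a!2 = ou1" and a3: "a!3 = ov1"
    unfolding a_def by simp_all
  have a1': "a ! Suc 0 = oe2" using a1 by simp
  have a4: "a!i = ozero" if "4 \<le> i" "i < n" for i
  proof -
    define k where "k = i - 4"
    have k: "i = Suc (Suc (Suc (Suc k)))" using that(1) unfolding k_def by simp
    have "k < n - 4" using that k by simp
    then show ?thesis unfolding a_def k by simp
  qed
  have la: "length a = n" unfolding a_def using assms(3) by simp
  obtain u1 u2 u3 u4 where bu: "b!2 = mq u1 u2 u3 u4" using bM[of 2] assms(3) by auto
  obtain v1 v2 v3 v4 where bv: "b!3 = mq v1 v2 v3 v4" using bM[of 3] assms(3) by auto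
  have e1: "u1 + u4 = 0" using Tr[of 2] assms(3) by (simp add: a2 bu ou1_def mq_def otr_def)
  have e2: "u1*u4 - u2*u3 = 0" using Nr[of 2] assms(3) by (simp add: a2 bu ou1_def mq_def onorm_def)
  have e3: "v1 + v4 = 0" using Tr[of 3] assms(3) by (simp add: a3 bv ov1_def mq_def otr_def)
  have e4: "v1*v4 - v2*v3 = 0" using Nr[of 3] assms(3) by (simp add: a3 bv ov1_def mq_def onorm_def)
  have e5: "u1*v1+u2*v3+u3*v2+u4*v4 = 1" using P2[of 2 3] assms(3)
    by (simp add: a2 a3 bu bv ou1_def ov1_def mq_def otr_def omult_def algebra_simps)
  have good: "goodUV (u1,u2,u3,u4) (v1,v2,v3,v4)" unfolding goodUV_def using e1 e2 e3 e4 e5 by simp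
  have key: "b!i = gg (u1,u2,u3,u4) (v1,v2,v3,v4) (a!i)" if hi: "i < n" for i
  proof -
    obtain z1 z2 z3 z4 where bz: "b!i = mq z1 z2 z3 z4" using bM[OF hi] by auto
    consider "i = 0" | "i = 1" | "i = 2" | "i = 3" | "4 \<le> i" by linarith
    then show ?thesis
    proof cases
      case 1
      have t1: "otr (omult (omult (b!i) (mq u1 u2 u3 u4)) (mq v1 v2 v3 v4)) = 1"
        using P3[of 0 2 3] assms(3) 1 bu bv
        by (simp add: a0 a2 a3 oe1_def ou1_def ov1_def omult_def otr_def)
      have t2: "otr (omult (b!i) (mq v1 v2 v3 v4)) = 0"
        using P2[of 0 3] assms(3) 1 bv by (simp add: a0 a3 oe1_def ov1_def omult_def otr_def)
      have t3: "otr (omult (b!i) (mq u1 u2 u3 u4)) = 0"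
        using P2[of 0 2] assms(3) 1 bu by (simp add: a0 a2 oe1_def ou1_def omult_def otr_def)
      have t0: "otr (b!i) = 1"
        using Tr[of 0] assms(3) 1 by (simp add: a0 oe1_def otr_def)
      have "b!i = gg (u1,u2,u3,u4) (v1,v2,v3,v4) (mq 1 0 0 (1 - 1))"
        by (rule step[OF good bz t1 t2 t3 t0])
      then show ?thesis using 1 by (simp add: a0 oe1_def mq_def)
    next
      case 2
      have t1: "otr (omult (omult (b!i) (mq u1 u2 u3 u4)) (mq v1 v2 v3 v4)) = 0"
        using P3[of 1 2 3] assms(3) 2 bu bv
        by (simp add: a1 a1' a2 a3 oe2_def ou1_def ov1_def omult_def otr_def)
      have t2: "otr (omult (b!i) (mq v1 v2 v3 v4)) = 0"
        using P2[of 1 3] assms(3) 2 bv by (simp add: a1 a1' a3 oe2_def ov1_def omult_def otr_def)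
      have t3: "otr (omult (b!i) (mq u1 u2 u3 u4)) = 0"
        using P2[of 1 2] assms(3) 2 bu by (simp add: a1 a1' a2 oe2_def ou1_def omult_def otr_def)
      have t0: "otr (b!i) = 1"
        using Tr[of 1] assms(3) 2 by (simp add: a1 a1' oe2_def otr_def)
      have "b!i = gg (u1,u2,u3,u4) (v1,v2,v3,v4) (mq 0 0 0 (1 - 0))"
        by (rule step[OF good bz t1 t2 t3 t0])
      then show ?thesis using 2 by (simp add: a1 a1' oe2_def mq_def)
    next
      case 3
      have bi: "b!i = mq u1 u2 u3 u4" using 3 bu by simp
      have t1: "otr (omult (omult (b!i) (mq u1 u2 u3 u4)) (mq v1 v2 v3 v4)) = 0"
        unfolding bi using e1 e2 e3 e4 e5 by (simp add: mq_def omult_def otr_def) algebra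
      have t2: "otr (omult (b!i) (mq v1 v2 v3 v4)) = 1"
        unfolding bi using e5 by (simp add: mq_def omult_def otr_def algebra_simps)
      have t3: "otr (omult (b!i) (mq u1 u2 u3 u4)) = 0"
        unfolding bi using e1 e2 by (simp add: mq_def omult_def otr_def) algebra
      have t0: "otr (b!i) = 0"
        unfolding bi using e1 by (simp add: mq_def otr_def)
      have "b!i = gg (u1,u2,u3,u4) (v1,v2,v3,v4) (mq 0 1 0 (0 - 0))"
        by (rule step[OF good bz t1 t2 t3 t0])
      then show ?thesis using 3 by (simp add: a2 ou1_def mq_def)
    next
      case 4
      have bi: "b!i = mq v1 v2 v3 v4" using 4 bv by simp
      have t1: "otr (omult (omult (b!i) (mq u1 u2 u3 u4)) (mq v1 v2 v3 v4)) = 0"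
        unfolding bi using e1 e2 e3 e4 e5 by (simp add: mq_def omult_def otr_def) algebra
      have t2: "otr (omult (b!i) (mq v1 v2 v3 v4)) = 0"
        unfolding bi using e3 e4 by (simp add: mq_def omult_def otr_def) algebra
      have t3: "otr (omult (b!i) (mq u1 u2 u3 u4)) = 1"
        unfolding bi using e5 by (simp add: mq_def omult_def otr_def algebra_simps)
      have t0: "otr (b!i) = 0"
        unfolding bi using e3 by (simp add: mq_def otr_def)
      have "b!i = gg (u1,u2,u3,u4) (v1,v2,v3,v4) (mq 0 0 1 (0 - 0))"
        by (rule step[OF good bz t1 t2 t3 t0])
      then show ?thesis using 4 by (simp add: a3 ov1_def mq_def)
    next
      case 5
      have ai: "a!i = ozero" using a4[OF 5 hi] .
      have t1: "otr (omult (omult (b!i) (mq u1 u2 u3 u4)) (mq v1 v2 v3 v4)) = 0"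
      proof -
        have "otr (omult (omult (b!2) (b!3)) (b!i)) = 0"
          using P3[of 2 3 i] 5 hi ai by (simp add: a2 a3 ou1_def ov1_def ozero_def omult_def otr_def)
        then show ?thesis unfolding bu bv bz cyc3 .
      qed
      have t2: "otr (omult (b!i) (mq v1 v2 v3 v4)) = 0"
      proof -
        have "otr (omult (b!3) (b!i)) = 0"
          using P2[of 3 i] 5 hi ai by (simp add: a3 ov1_def ozero_def omult_def otr_def)
        then show ?thesis unfolding bv bz cyc2 .
      qed
      have t3: "otr (omult (b!i) (mq u1 u2 u3 u4)) = 0"
      proof -
        have "otr (omult (b!2) (b!i)) = 0"
          using P2[of 2 i] 5 hi ai by (simp add: a2 ou1_def ozero_def omult_def otr_def)
        then show ?thesis unfolding bu bz cyc2 .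
      qed
      have t0: "otr (b!i) = 0"
        using Tr[OF hi] ai by (simp add: ozero_def otr_def)
      have "b!i = gg (u1,u2,u3,u4) (v1,v2,v3,v4) (mq 0 0 0 (0 - 0))"
        by (rule step[OF good bz t1 t2 t3 t0])
      then show ?thesis using ai by (simp add: ozero_def mq_def)
    qed
  qed
  have "b = map (gg (u1,u2,u3,u4) (v1,v2,v3,v4)) a"
    by (rule nth_equalityI) (simp_all add: la assms(4) key)
  from orbit_eq[OF gg_G2[OF good] this] show ?thesis unfolding a_def .
qed

end
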